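(* Consider a causal transformer viewed as a message-passing network on token positions $1,\dots,n$, with token representations $h^{(l)}_i\in\mathbb{R}^{k}$ at layer $l$ updated by $$h^{(l+1)}_i=\phi_l\Big(h^{(l)}_i,\ \sum_{j\le i}A^{(l)}_{ij}\,\psi_l\big(h^{(l)}_j\big)\Big),$$ where for every layer $l$: $A^{(l)}\in\mathbb{R}^{n\times n}$ is a lower-triangular, row-stochastic matrix with nonnegative entries that is treated as fixed (independent of the representations $h$); $\psi_l:\mathbb{R}^k\to\mathbb{R}^{k}$ and $\phi_l:\mathbb{R}^k\times\mathbb{R}^k\to\mathbb{R}^k$ are differentiable. Suppose there is a constant $C>0$ such that for all layers $l$ and all arguments, $\|\partial_1\phi_l\|\le C$ and $\|\partial_2\phi_l\|\,\|\nabla\psi_l\|\le C$ (operator norms), where $\partial_1,\partial_2$ denote the Jacobians of $\phi_l$ with respect to its first and second arguments. Then for every layer $L\ge 0$, every $r\ge 0$, and all positions $s\le d$, $$\left\|\frac{\partial h^{(L+r)}_d}{\partial h^{(L)}_s}\right\|\le C^{r}\Big(\prod_{t=0}^{r-1}\big(I+A^{(L+t)}\big)\Big)_{ds},$$ where $I$ is the $n\times n$ identity, the product is ordered with later layers on the left, i.e. $\prod_{t=0}^{r-1}(I+A^{(L+t)})=(I+A^{(L+r-1)})\cdots(I+A^{(L)})$, and the empty product ($r=0$) is $I$.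
   Context: $\|\cdot\|$ denotes the operator norm of a Jacobian matrix. In a standard transformer, $\psi_l(h_j)=h_jW_V$ (value projection), $A^{(l)}_{ij}$ are the causal softmax attention weights, and $\phi_l$ absorbs the residual connection, layer norms and MLP; the theorem is stated under the simplifying assumption that the attention weights do not depend on $h$. *)

theory Defs
  imports "HOL-Analysis.Analysis"
begin

text \<open>Token positions are the elements of a finite linearly ordered type 'n
  (positions 1..n); representations live in real^'k (Euclidean norm, so onorm is
  the spectral operator norm of the Jacobian).\<close>

definition vupd :: "'b^'n \<Rightarrow> 'n \<Rightarrow> 'b \<Rightarrow> 'b^'n" where
  "vupd H s x = (\<chi> i. if i = s then x else H $ i)"

definition partial1 :: "((real^'k) \<times> (real^'k) \<Rightarrow> real^'k) \<Rightarrow> real^'k \<Rightarrow> real^'k \<Rightarrow> (real^'k \<Rightarrow> real^'k)" where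
  "partial1 phi x y = (\<lambda>u. frechet_derivative phi (at (x, y)) (u, 0))"

definition partial2 :: "((real^'k) \<times> (real^'k) \<Rightarrow> real^'k) \<Rightarrow> real^'k \<Rightarrow> real^'k \<Rightarrow> (real^'k \<Rightarrow> real^'k)" where
  "partial2 phi x y = (\<lambda>v. frechet_derivative phi (at (x, y)) (0, v))"

definition layer :: "((real^'k) \<times> (real^'k) \<Rightarrow> real^'k) \<Rightarrow> (real^'k \<Rightarrow> real^'k)
    \<Rightarrow> ((real, 'n::{finite,linorder}) vec, 'n) vec \<Rightarrow> ((real,'k) vec,'n) vec \<Rightarrow> ((real,'k) vec,'n) vec" where
  "layer phi psi A H = (\<chi> i. phi (H $ i, \<Sum>j\<in>{j. j \<le> i}. (A $ i $ j) *\<^sub>R psi (H $ j)))"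

fun run :: "(nat \<Rightarrow> (real^'k) \<times> (real^'k) \<Rightarrow> real^'k) \<Rightarrow> (nat \<Rightarrow> real^'k \<Rightarrow> real^'k)
    \<Rightarrow> (nat \<Rightarrow> ((real, 'n::{finite,linorder}) vec, 'n) vec) \<Rightarrow> nat \<Rightarrow> nat \<Rightarrow> ((real,'k) vec,'n) vec \<Rightarrow> ((real,'k) vec,'n) vec" where
  "run phi psi A L 0 H = H"
| "run phi psi A L (Suc r) H = layer (phi (L + r)) (psi (L + r)) (A (L + r)) (run phi psi A L r H)"

fun prodIA :: "(nat \<Rightarrow> real^'n^'n) \<Rightarrow> nat \<Rightarrow> nat \<Rightarrow> real^'n^'n" where
  "prodIA A L 0 = mat 1"
| "prodIA A L (Suc r) = (mat 1 + A (L + r)) ** prodIA A L r"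

end

theory Submission
  imports Defs
begin

lemma prodIA_nonneg:
  assumes "\<forall>l i j. 0 \<le> A l $ i $ j"
  shows "\<forall>i j. 0 \<le> prodIA A L r $ i $ j"
proof (induction r)
  case 0
  then show ?case by (simp add: mat_def)
next
  case (Suc r)
  show ?case using Suc assms
    by (auto simp: matrix_matrix_mult_def mat_def intro!: sum_nonneg mult_nonneg_nonneg)
qed

lemma prodIA_Suc_entry:
  "prodIA A L (Suc r) $ d $ s = prodIA A L r $ d $ s + (\<Sum>j\<in>UNIV. A (L+r) $ d $ j * prodIA A L r $ j $ s)"
proof -
  have "prodIA A L (Suc r) $ d $ s = (\<Sum>k\<in>UNIV. ((if d = k then 1 else 0) + A (L+r) $ d $ k) * prodIA A L r $ k $ s)"
    by (simp add: matrix_matrix_mult_def mat_def)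
  also have "\<dots> = (\<Sum>k\<in>UNIV. (if d = k then prodIA A L r $ k $ s else 0)) + (\<Sum>k\<in>UNIV. A (L+r) $ d $ k * prodIA A L r $ k $ s)"
  proof -
    have e: "\<And>k x. (if d = k then 1 else 0) * x = (if d = k then x else (0::real))" by simp
    show ?thesis by (simp only: distrib_right sum.distrib e)
  qed
  finally show ?thesis by simp
qed

lemma main:
  fixes A :: "nat \<Rightarrow> ((real, 'n::{finite,linorder}) vec, 'n) vec"
    and phi :: "nat \<Rightarrow> (real^'k) \<times> (real^'k) \<Rightarrow> real^'k"
    and psi :: "nat \<Rightarrow> real^'k \<Rightarrow> real^'k"
    and C :: real and L r :: nat and s :: 'n and H :: "((real, 'k) vec, 'n) vec"
  assumes A_nonneg: "\<forall>l i j. 0 \<le> A l $ i $ j"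
    and phi_diff: "\<forall>l p. phi l differentiable (at p)"
    and psi_diff: "\<forall>l x. psi l differentiable (at x)"
    and C_pos: "C > 0"
    and bound1: "\<forall>l x y. onorm (partial1 (phi l) x y) \<le> C"
    and bound2: "\<forall>l x y z. onorm (partial2 (phi l) x y) * onorm (frechet_derivative (psi l) (at z)) \<le> C"
  shows "\<forall>d. \<exists>J. ((\<lambda>x. run phi psi A L r (vupd H s x) $ d) has_derivative J) (at (H $ s))
             \<and> onorm J \<le> C ^ r * (prodIA A L r $ d $ s)"
proof (induction r)
  case 0
  show ?case
  proof
    fix d
    show "\<exists>J. ((\<lambda>x. run phi psi A L 0 (vupd H s x) $ d) has_derivative J) (at (H $ s))
             \<and> onorm J \<le> C ^ 0 * (prodIA A L 0 $ d $ s)"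
    proof (cases "d = s")
      case True
      show ?thesis
        apply (rule exI[of _ "\<lambda>x. x"])
        using True by (auto simp: vupd_def mat_def intro!: onorm_le)
    next
      case False
      show ?thesis
        apply (rule exI[of _ "\<lambda>x. 0"])
        using False by (auto simp: vupd_def mat_def intro!: onorm_le)
    qed
  qed
next
  case (Suc r)
  define G where "G x = run phi psi A L r (vupd H s x)" for x
  define x0 where "x0 = H $ s"
  define l where "l = L + r"
  from Suc obtain J where J: "\<And>j. ((\<lambda>x. G x $ j) has_derivative J j) (at x0)"
    "\<And>j. onorm (J j) \<le> C ^ r * (prodIA A L r $ j $ s)"
    unfolding G_def x0_def by metis
  have Jbl: "bounded_linear (J j)" for j using J(1) by blast
  define Dpsi where "Dpsi j = frechet_derivative (psi l) (at (G x0 $ j))" for j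
  have psid: "(psi l has_derivative Dpsi j) (at (G x0 $ j))" for j
    unfolding Dpsi_def using psi_diff[rule_format, THEN frechet_derivative_works[THEN iffD1]] by blast
  have psibl: "bounded_linear (Dpsi j)" for j using psid by blast
  have P0: "\<forall>i j. 0 \<le> prodIA A L r $ i $ j" using prodIA_nonneg[OF A_nonneg] .
  show ?case
  proof
    fix d
    define S where "S x = (\<Sum>j\<in>{j. j \<le> d}. (A l $ d $ j) *\<^sub>R psi l (G x $ j))" for x
    define S' where "S' u = (\<Sum>j\<in>{j. j \<le> d}. (A l $ d $ j) *\<^sub>R Dpsi j (J j u))" for u
    define D where "D = frechet_derivative (phi l) (at (G x0 $ d, S x0))"
    have phid: "(phi l has_derivative D) (at (G x0 $ d, S x0))"
      unfolding D_def using phi_diff[rule_format, THEN frechet_derivative_works[THEN iffD1]] by blast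
    have Dbl: "bounded_linear D" using phid by blast
    have eq: "(\<lambda>x. run phi psi A L (Suc r) (vupd H s x) $ d) = (\<lambda>x. phi l (G x $ d, S x))"
      by (simp add: G_def S_def l_def layer_def)
    have comp: "((\<lambda>x. psi l (G x $ j)) has_derivative (\<lambda>u. Dpsi j (J j u))) (at x0)" for j
      using diff_chain_at[OF J(1) psid[of j]] by (simp add: o_def)
    have Sd: "(S has_derivative S') (at x0)"
      unfolding S_def S'_def
      by (intro has_derivative_sum has_derivative_scaleR_right comp)
    have pd: "((\<lambda>x. (G x $ d, S x)) has_derivative (\<lambda>u. (J d u, S' u))) (at x0)"
      by (intro has_derivative_Pair J(1) Sd)
    have fd: "((\<lambda>x. phi l (G x $ d, S x)) has_derivative (\<lambda>u. D (J d u, S' u))) (at x0)"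
      using diff_chain_at[OF pd phid[unfolded o_def]] by (simp add: o_def)
    have bnd: "norm (D (J d u, S' u)) \<le> C ^ Suc r * (prodIA A L (Suc r) $ d $ s) * norm u" for u
    proof -
      define p1 where "p1 = partial1 (phi l) (G x0 $ d) (S x0)"
      define p2 where "p2 = partial2 (phi l) (G x0 $ d) (S x0)"
      have p1bl: "bounded_linear p1" unfolding p1_def partial1_def D_def[symmetric]
        by (rule bounded_linear_compose[OF Dbl]) (auto intro: bounded_linear_Pair bounded_linear_ident bounded_linear_zero)
      have p2bl: "bounded_linear p2" unfolding p2_def partial2_def D_def[symmetric]
        by (rule bounded_linear_compose[OF Dbl]) (auto intro: bounded_linear_Pair bounded_linear_ident bounded_linear_zero)
      have split: "D (J d u, S' u) = p1 (J d u) + p2 (S' u)"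
        unfolding p1_def p2_def partial1_def partial2_def D_def[symmetric]
        using linear_add[OF bounded_linear.linear[OF Dbl], of "(J d u, 0)" "(0, S' u)"] by simp
      have n1: "norm (p1 (J d u)) \<le> C * (C ^ r * prodIA A L r $ d $ s) * norm u"
      proof -
        have "norm (p1 (J d u)) \<le> onorm p1 * norm (J d u)" by (rule onorm[OF p1bl])
        also have "\<dots> \<le> C * (onorm (J d) * norm u)"
          apply (rule mult_mono)
          using bound1 p1_def onorm[OF Jbl] C_pos onorm_pos_le[OF Jbl] by auto
        also have "\<dots> \<le> C * (C ^ r * prodIA A L r $ d $ s * norm u)"
          using J(2)[of d] C_pos by (intro mult_left_mono mult_right_mono) auto
        finally show ?thesis by simp
      qed
      have n2: "norm (p2 (S' u)) \<le> (\<Sum>j\<in>UNIV. A l $ d $ j * (C * (C ^ r * prodIA A L r $ j $ s))) * norm u"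
      proof -
        have "norm (p2 (S' u)) = norm (\<Sum>j\<in>{j. j \<le> d}. (A l $ d $ j) *\<^sub>R p2 (Dpsi j (J j u)))"
          unfolding S'_def by (simp add: linear_sum[OF bounded_linear.linear[OF p2bl]]
              linear_scale[OF bounded_linear.linear[OF p2bl]])
        also have "\<dots> \<le> (\<Sum>j\<in>{j. j \<le> d}. norm ((A l $ d $ j) *\<^sub>R p2 (Dpsi j (J j u))))"
          by (rule norm_sum)
        also have "\<dots> \<le> (\<Sum>j\<in>{j. j \<le> d}. A l $ d $ j * (C * (C ^ r * prodIA A L r $ j $ s)) * norm u)"
        proof (rule sum_mono)
          fix j
          have "norm (p2 (Dpsi j (J j u))) \<le> onorm p2 * norm (Dpsi j (J j u))" by (rule onorm[OF p2bl])
          also have "\<dots> \<le> onorm p2 * (onorm (Dpsi j) * norm (J j u))"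
            by (intro mult_left_mono onorm[OF psibl] onorm_pos_le[OF p2bl])
          also have "\<dots> = (onorm p2 * onorm (Dpsi j)) * norm (J j u)" by simp
          also have "\<dots> \<le> C * (onorm (J j) * norm u)"
            apply (rule mult_mono)
            using bound2 p2_def Dpsi_def onorm[OF Jbl] C_pos by auto
          also have "\<dots> \<le> C * (C ^ r * prodIA A L r $ j $ s * norm u)"
            using J(2)[of j] C_pos by (intro mult_left_mono mult_right_mono) auto
          finally have "norm (p2 (Dpsi j (J j u))) \<le> C * (C ^ r * prodIA A L r $ j $ s * norm u)" .
          then show "norm ((A l $ d $ j) *\<^sub>R p2 (Dpsi j (J j u))) \<le> A l $ d $ j * (C * (C ^ r * prodIA A L r $ j $ s)) * norm u"
            using A_nonneg by (simp add: mult_left_mono mult.assoc)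
        qed
        also have "\<dots> \<le> (\<Sum>j\<in>UNIV. A l $ d $ j * (C * (C ^ r * prodIA A L r $ j $ s)) * norm u)"
          using A_nonneg P0 C_pos by (intro sum_mono2) auto
        finally show ?thesis by (simp add: sum_distrib_right)
      qed
      have "norm (D (J d u, S' u)) \<le> norm (p1 (J d u)) + norm (p2 (S' u))"
        unfolding split by (rule norm_triangle_ineq)
      also have "\<dots> \<le> C * (C ^ r * prodIA A L r $ d $ s) * norm u + (\<Sum>j\<in>UNIV. A l $ d $ j * (C * (C ^ r * prodIA A L r $ j $ s))) * norm u"
        using n1 n2 by linarith
      also have "\<dots> = C ^ Suc r * (prodIA A L (Suc r) $ d $ s) * norm u"
        unfolding prodIA_Suc_entry l_def
        by (simp add: algebra_simps sum_distrib_left sum_distrib_right)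
      finally show ?thesis .
    qed
    show "\<exists>J. ((\<lambda>x. run phi psi A L (Suc r) (vupd H s x) $ d) has_derivative J) (at (H $ s))
             \<and> onorm J \<le> C ^ Suc r * (prodIA A L (Suc r) $ d $ s)"
      apply (rule exI[of _ "\<lambda>u. D (J d u, S' u)"])
      using fd bnd unfolding eq x0_def by (auto intro!: onorm_le)
  qed
qed

theorem theorem3p1:
  fixes A :: "nat \<Rightarrow> ((real, 'n::{finite,linorder}) vec, 'n) vec"
    and phi :: "nat \<Rightarrow> (real^'k) \<times> (real^'k) \<Rightarrow> real^'k"
    and psi :: "nat \<Rightarrow> real^'k \<Rightarrow> real^'k"
    and C :: real and L r :: nat and s d :: 'n and H :: "((real, 'k) vec, 'n) vec"
  assumes A_nonneg: "\<forall>l i j. 0 \<le> A l $ i $ j"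
    and A_lower: "\<forall>l i j. i < j \<longrightarrow> A l $ i $ j = 0"
    and A_stoch: "\<forall>l i. (\<Sum>j\<in>UNIV. A l $ i $ j) = 1"
    and phi_diff: "\<forall>l p. phi l differentiable (at p)"
    and psi_diff: "\<forall>l x. psi l differentiable (at x)"
    and C_pos: "C > 0"
    and bound1: "\<forall>l x y. onorm (partial1 (phi l) x y) \<le> C"
    and bound2: "\<forall>l x y z. onorm (partial2 (phi l) x y) * onorm (frechet_derivative (psi l) (at z)) \<le> C"
    and sd: "s \<le> d"
  shows "\<exists>J. ((\<lambda>x. run phi psi A L r (vupd H s x) $ d) has_derivative J) (at (H $ s))
             \<and> onorm J \<le> C ^ r * (prodIA A L r $ d $ s)"
  using main[OF A_nonneg phi_diff psi_diff C_pos bound1 bound2] by blast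

end
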